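(* Let $l\ge 1$ and let $a_1,\dots,a_{2l+1}$ be a chain of simple closed curves on an oriented surface ($a_i$ and $a_{i+1}$ meet transversely once, $a_i\cap a_j=\emptyset$ for $|i-j|\ge2$). Define $\phi_l=a_{2l+1}^{\,l+1}a_{2l-1}^{\,l}\cdots a_5^{3}a_3^{2}a_1$. Let $D=d_1\cdots d_{k_1}$ and $E=e_1\cdots e_{k_2}$ be arbitrary products of right-handed Dehn twists, and write ${}_{\psi}(D)={}_{\psi}(d_1)\cdots{}_{\psi}(d_{k_1})$, ${}_{\psi}(E)={}_{\psi}(e_1)\cdots{}_{\psi}(e_{k_2})$. Then (a) $D\cdot a_{2l}\cdots a_2a_1\cdot a_{2l+1}\cdots a_2a_1\cdot E\ \sim_C\ {}_{\phi_l}(D)\cdot(a_{2l+1}^{\,l+1}\, a_{2l}\cdots a_2a_1)\cdot(b_{2l}\cdots b_4 b_2)\cdot{}_{\phi_l}(E)$; (b) $D\cdot a_1a_2\cdots a_{2l+1}\cdot a_1a_2\cdots a_{2l}\cdot E\ \sim_C\ {}_{\phi_l^{-1}}(D)\cdot(\bar b_2\bar b_4\cdots\bar b_{2l})\cdot(a_1a_2\cdots a_{2l}\,a_{2l+1}^{\,l+1})\cdot{}_{\phi_l^{-1}}(E)$.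
   Context: $a_i$ denotes the right-handed Dehn twist $t_{a_i}$; for a mapping class $f$ and a Dehn twist $t_x$, ${}_f(x)$ denotes $t_{f(x)}=ft_xf^{-1}$. $b_i=t_{a_{i+1}}(a_i)$ and $\bar b_i=t_{a_{i+1}}^{-1}(a_i)$. Words of Dehn twists are related by $\sim_C$ if one is obtained from the other by a finite sequence of elementary transformations ($\cdots t_vt_w\cdots\leftrightarrow\cdots t_{t_v(w)}t_v\cdots$) and conjugations, where a conjugation moves the last letter of a word to the front (or vice versa), i.e. cyclic permutation, equivalently simultaneous conjugation of all letters. *)

theory Defs
  imports "HOL-Algebra.Group"
begin

text \<open>Abstract model: the Dehn twist t_x is identified with an element of a group G
(the mapping class group); since a Dehn twist determines its curve, a word of Dehn
twists is a list of group elements.  For a mapping class f, the twist t_{f(x)} equals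
f t_x f^{-1}, written conjg G f x.\<close>

definition conjg :: "('a, 'b) monoid_scheme \<Rightarrow> 'a \<Rightarrow> 'a \<Rightarrow> 'a" where
  "conjg G f x = f \<otimes>\<^bsub>G\<^esub> x \<otimes>\<^bsub>G\<^esub> inv\<^bsub>G\<^esub> f"

inductive C_step :: "('a, 'b) monoid_scheme \<Rightarrow> 'a list \<Rightarrow> 'a list \<Rightarrow> bool"
  for G where
  elementary: "C_step G (xs @ [v, w] @ ys) (xs @ [conjg G v w, v] @ ys)"
| conjugation: "C_step G (xs @ [x]) (x # xs)"

definition C_equiv :: "('a, 'b) monoid_scheme \<Rightarrow> 'a list \<Rightarrow> 'a list \<Rightarrow> bool" where
  "C_equiv G u w \<longleftrightarrow> (symclp (C_step G))\<^sup>*\<^sup>* u w"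

text \<open>Chain a_1,...,a_n of Dehn twists: adjacent ones satisfy the braid relation
(curves meeting transversely once), non-adjacent ones commute (disjoint curves).\<close>
definition twist_chain :: "('a, 'b) monoid_scheme \<Rightarrow> (nat \<Rightarrow> 'a) \<Rightarrow> nat \<Rightarrow> bool" where
  "twist_chain G a n \<longleftrightarrow>
     (\<forall>i\<in>{1..n}. a i \<in> carrier G) \<and>
     (\<forall>i. 1 \<le> i \<and> i < n \<longrightarrow>
        a i \<otimes>\<^bsub>G\<^esub> a (Suc i) \<otimes>\<^bsub>G\<^esub> a i = a (Suc i) \<otimes>\<^bsub>G\<^esub> a i \<otimes>\<^bsub>G\<^esub> a (Suc i)) \<and>
     (\<forall>i j. i \<in> {1..n} \<and> j \<in> {1..n} \<and> i + 2 \<le> j \<longrightarrow>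
        a i \<otimes>\<^bsub>G\<^esub> a j = a j \<otimes>\<^bsub>G\<^esub> a i)"

definition phi :: "('a, 'b) monoid_scheme \<Rightarrow> (nat \<Rightarrow> 'a) \<Rightarrow> nat \<Rightarrow> 'a" where
  "phi G a l = foldr (\<lambda>j acc. (a (2*j+1) [^]\<^bsub>G\<^esub> (j+1)) \<otimes>\<^bsub>G\<^esub> acc) (rev [0..<Suc l]) \<one>\<^bsub>G\<^esub>"

definition bcurve :: "('a, 'b) monoid_scheme \<Rightarrow> (nat \<Rightarrow> 'a) \<Rightarrow> nat \<Rightarrow> 'a" where
  "bcurve G a i = conjg G (a (Suc i)) (a i)"

definition bbar :: "('a, 'b) monoid_scheme \<Rightarrow> (nat \<Rightarrow> 'a) \<Rightarrow> nat \<Rightarrow> 'a" where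
  "bbar G a i = conjg G (inv\<^bsub>G\<^esub> (a (Suc i))) (a i)"

end

theory Submission
  imports Defs
begin


definition Hs :: "('a, 'b) monoid_scheme \<Rightarrow> 'a list \<Rightarrow> 'a list \<Rightarrow> bool" where
  "Hs G u v \<longleftrightarrow> (\<exists>xs p q ys. p \<in> carrier G \<and> q \<in> carrier G \<and> set xs \<subseteq> carrier G
      \<and> set ys \<subseteq> carrier G \<and> u = xs @ [p, q] @ ys \<and> v = xs @ [conjg G p q, p] @ ys)"

definition H :: "('a, 'b) monoid_scheme \<Rightarrow> 'a list \<Rightarrow> 'a list \<Rightarrow> bool" where
  "H G = (symclp (Hs G))\<^sup>*\<^sup>*"

definition Cs :: "('a, 'b) monoid_scheme \<Rightarrow> 'a list \<Rightarrow> 'a list \<Rightarrow> bool" where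
  "Cs G u v \<longleftrightarrow> C_step G u v \<and> set u \<subseteq> carrier G \<and> set v \<subseteq> carrier G"

definition CE :: "('a, 'b) monoid_scheme \<Rightarrow> 'a list \<Rightarrow> 'a list \<Rightarrow> bool" where
  "CE G = (symclp (Cs G))\<^sup>*\<^sup>*"

lemma symclp_rtranclp_sym: "(symclp r)\<^sup>*\<^sup>* x y \<Longrightarrow> (symclp r)\<^sup>*\<^sup>* y x"
  by (metis equivclp_def equivclp_sym)

lemma CE_C_equiv: "CE G u v \<Longrightarrow> C_equiv G u v"
  unfolding CE_def C_equiv_def
  by (erule rtranclp_mono[THEN predicate2D, rotated]) (auto simp: symclp_def Cs_def)

context group
begin

lemma inv_cancel_assoc[simp]:
  "g \<in> carrier G \<Longrightarrow> x \<in> carrier G \<Longrightarrow> inv g \<otimes> (g \<otimes> x) = x"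
  "g \<in> carrier G \<Longrightarrow> x \<in> carrier G \<Longrightarrow> g \<otimes> (inv g \<otimes> x) = x"
  by (simp_all add: m_assoc[symmetric])

lemma conjg_closed[simp]: "p \<in> carrier G \<Longrightarrow> q \<in> carrier G \<Longrightarrow> conjg G p q \<in> carrier G"
  by (simp add: conjg_def)

lemma conjg_mult: "g \<in> carrier G \<Longrightarrow> h \<in> carrier G \<Longrightarrow> w \<in> carrier G \<Longrightarrow>
   conjg G g (conjg G h w) = conjg G (g \<otimes> h) w"
  by (simp add: conjg_def m_assoc inv_mult_group)

lemma conjg_one[simp]: "w \<in> carrier G \<Longrightarrow> conjg G \<one> w = w"
  by (simp add: conjg_def)

lemma conjg_inv_cancel[simp]: "g \<in> carrier G \<Longrightarrow> w \<in> carrier G \<Longrightarrow> conjg G (inv g) (conjg G g w) = w"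
  by (simp add: conjg_def m_assoc[symmetric]) (simp add: m_assoc)

lemma conjg_inv_cancel2[simp]: "g \<in> carrier G \<Longrightarrow> w \<in> carrier G \<Longrightarrow> conjg G g (conjg G (inv g) w) = w"
  by (simp add: conjg_def m_assoc[symmetric]) (simp add: m_assoc)

lemma conjg_comm: "g \<in> carrier G \<Longrightarrow> w \<in> carrier G \<Longrightarrow> g \<otimes> w = w \<otimes> g \<Longrightarrow> conjg G g w = w"
  by (simp add: conjg_def m_assoc)

lemma conjg_self[simp]: "g \<in> carrier G \<Longrightarrow> conjg G g g = g"
  by (simp add: conjg_def m_assoc)

lemma conjg_hom: "g \<in> carrier G \<Longrightarrow> p \<in> carrier G \<Longrightarrow> q \<in> carrier G \<Longrightarrow>
  conjg G g (conjg G p q) = conjg G (conjg G g p) (conjg G g q)"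
  by (simp add: conjg_def m_assoc inv_mult_group)

lemma conjg_inv: "g \<in> carrier G \<Longrightarrow> w \<in> carrier G \<Longrightarrow> inv (conjg G g w) = conjg G g (inv w)"
  by (simp add: conjg_def m_assoc inv_mult_group)

lemma comm_mult: "g \<in> carrier G \<Longrightarrow> x \<in> carrier G \<Longrightarrow> y \<in> carrier G \<Longrightarrow>
  g \<otimes> x = x \<otimes> g \<Longrightarrow> g \<otimes> y = y \<otimes> g \<Longrightarrow> g \<otimes> (x \<otimes> y) = (x \<otimes> y) \<otimes> g"
  by (metis m_assoc)

lemma comm_inv: "g \<in> carrier G \<Longrightarrow> x \<in> carrier G \<Longrightarrow> g \<otimes> x = x \<otimes> g \<Longrightarrow> g \<otimes> inv x = inv x \<otimes> g"
proof -
  assume a: "g \<in> carrier G" "x \<in> carrier G" "g \<otimes> x = x \<otimes> g"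
  have "g \<otimes> inv x = inv x \<otimes> (x \<otimes> g) \<otimes> inv x" using a by (simp add: m_assoc)
  also have "\<dots> = inv x \<otimes> (g \<otimes> x) \<otimes> inv x" using a by simp
  also have "\<dots> = inv x \<otimes> g" using a(1,2) by (simp add: m_assoc)
  finally show ?thesis .
qed

lemma comm_pow: "g \<in> carrier G \<Longrightarrow> x \<in> carrier G \<Longrightarrow> g \<otimes> x = x \<otimes> g \<Longrightarrow> g \<otimes> x [^] (n::nat) = x [^] n \<otimes> g"
  by (metis group_commutes_pow)

lemma comm_conjg: "g \<in> carrier G \<Longrightarrow> x \<in> carrier G \<Longrightarrow> y \<in> carrier G \<Longrightarrow>
  g \<otimes> x = x \<otimes> g \<Longrightarrow> g \<otimes> y = y \<otimes> g \<Longrightarrow> g \<otimes> conjg G x y = conjg G x y \<otimes> g"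
  unfolding conjg_def by (intro comm_mult comm_inv) auto

lemma H_refl[simp]: "H G u u" by (simp add: H_def)
lemma H_trans: "H G u v \<Longrightarrow> H G v w \<Longrightarrow> H G u w" unfolding H_def by (rule rtranclp_trans)
lemma H_sym: "H G u v \<Longrightarrow> H G v u" unfolding H_def by (rule symclp_rtranclp_sym)

lemma Hs_ctx: "Hs G u v \<Longrightarrow> set xs \<subseteq> carrier G \<Longrightarrow> set ys \<subseteq> carrier G \<Longrightarrow> Hs G (xs @ u @ ys) (xs @ v @ ys)"
  unfolding Hs_def
  apply clarify
  subgoal for xs' p q ys'
    by (rule exI[of _ "xs @ xs'"], rule exI[of _ p], rule exI[of _ q], rule exI[of _ "ys' @ ys"]) auto
  done

lemma H_ctx: "H G u v \<Longrightarrow> set xs \<subseteq> carrier G \<Longrightarrow> set ys \<subseteq> carrier G \<Longrightarrow> H G (xs @ u @ ys) (xs @ v @ ys)"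
  unfolding H_def
proof (induction rule: rtranclp_induct)
  case base then show ?case by simp
next
  case (step y z)
  then have "symclp (Hs G) (xs @ y @ ys) (xs @ z @ ys)"
    by (auto simp: symclp_def intro: Hs_ctx)
  with step show ?case by (meson rtranclp.rtrancl_into_rtrancl)
qed

lemma H_elem: "p \<in> carrier G \<Longrightarrow> q \<in> carrier G \<Longrightarrow> H G [p, q] [conjg G p q, p]"
  unfolding H_def
  by (rule r_into_rtranclp, rule symclpI1, unfold Hs_def)
     (rule exI[of _ "[]"], rule exI[of _ p], rule exI[of _ q], rule exI[of _ "[]"], simp)

lemma Hs_Cs: "Hs G u v \<Longrightarrow> Cs G u v"
  unfolding Hs_def Cs_def
  apply clarify
  subgoal for xs p q ys
    using C_step.elementary[of G xs p q ys] by auto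
  done

lemma H_CE: "H G u v \<Longrightarrow> CE G u v"
  unfolding H_def CE_def
  apply (erule rtranclp_mono[THEN predicate2D, rotated])
  apply (auto simp: symclp_def intro: Hs_Cs)
  done

end


definition lprod :: "('a, 'b) monoid_scheme \<Rightarrow> 'a list \<Rightarrow> 'a" where
  "lprod G xs = foldr (\<lambda>x acc. x \<otimes>\<^bsub>G\<^esub> acc) xs \<one>\<^bsub>G\<^esub>"

context group
begin

lemma lprod_Nil[simp]: "lprod G [] = \<one>" by (simp add: lprod_def)
lemma lprod_Cons[simp]: "lprod G (x # xs) = x \<otimes> lprod G xs" by (simp add: lprod_def)
lemma lprod_closed[simp]: "set xs \<subseteq> carrier G \<Longrightarrow> lprod G xs \<in> carrier G"
  by (induction xs) auto

lemma map_conjg_closed: "g \<in> carrier G \<Longrightarrow> set U \<subseteq> carrier G \<Longrightarrow> set (map (conjg G g) U) \<subseteq> carrier G"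
  by auto

lemma map_conjg_mult: "g \<in> carrier G \<Longrightarrow> h \<in> carrier G \<Longrightarrow> set U \<subseteq> carrier G \<Longrightarrow>
  map (conjg G g) (map (conjg G h) U) = map (conjg G (g \<otimes> h)) U"
  by (auto simp: conjg_mult)

lemma map_conjg_inv_cancel: "g \<in> carrier G \<Longrightarrow> set U \<subseteq> carrier G \<Longrightarrow>
  map (conjg G g) (map (conjg G (inv g)) U) = U"
  by (induction U) auto

lemma map_conjg_inv_cancel2: "g \<in> carrier G \<Longrightarrow> set U \<subseteq> carrier G \<Longrightarrow>
  map (conjg G (inv g)) (map (conjg G g) U) = U"
  by (induction U) auto

lemma map_conjg_comm: "g \<in> carrier G \<Longrightarrow> set U \<subseteq> carrier G \<Longrightarrow> (\<forall>u\<in>set U. g \<otimes> u = u \<otimes> g) \<Longrightarrow>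
  map (conjg G g) U = U"
  by (induction U) (auto simp: conjg_comm)

lemma map_conjg_one: "set U \<subseteq> carrier G \<Longrightarrow> map (conjg G \<one>) U = U"
  by (induction U) auto

lemma H_right: "x \<in> carrier G \<Longrightarrow> set U \<subseteq> carrier G \<Longrightarrow> H G (x # U) (map (conjg G x) U @ [x])"
proof (induction U)
  case Nil then show ?case by simp
next
  case (Cons u U)
  have "H G (x # u # U) ([conjg G x u, x] @ U)"
    using H_ctx[OF H_elem[of x u], of "[]" U] Cons.prems by simp
  moreover have "H G ([conjg G x u] @ (x # U) @ []) ([conjg G x u] @ (map (conjg G x) U @ [x]) @ [])"
    using Cons by (intro H_ctx) auto
  ultimately show ?case by (auto intro: H_trans)
qed

lemma H_left: "x \<in> carrier G \<Longrightarrow> set U \<subseteq> carrier G \<Longrightarrow> H G (U @ [x]) (x # map (conjg G (inv x)) U)"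
proof -
  assume a: "x \<in> carrier G" "set U \<subseteq> carrier G"
  have "H G (x # map (conjg G (inv x)) U) (U @ [x])"
    using H_right[of x "map (conjg G (inv x)) U"] a map_conjg_closed[of "inv x" U] by (simp add: map_conjg_inv_cancel del: map_map)
  then show ?thesis by (rule H_sym)
qed

lemma H_rep_right: "x \<in> carrier G \<Longrightarrow> set U \<subseteq> carrier G \<Longrightarrow>
  H G (replicate m x @ U) (map (conjg G (x [^] m)) U @ replicate m x)"
proof (induction m)
  case 0 then show ?case by (simp add: map_conjg_one)
next
  case (Suc m)
  have "H G ([x] @ (replicate m x @ U) @ []) ([x] @ (map (conjg G (x [^] m)) U @ replicate m x) @ [])"
    using Suc by (intro H_ctx) auto
  moreover have "H G ([] @ (x # map (conjg G (x [^] m)) U) @ replicate m x)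
      ([] @ (map (conjg G x) (map (conjg G (x [^] m)) U) @ [x]) @ replicate m x)"
    using Suc.prems by (intro H_ctx H_right) auto
  moreover have "map (conjg G x) (map (conjg G (x [^] m)) U) = map (conjg G (x [^] Suc m)) U"
    using Suc.prems by (simp add: map_conjg_mult nat_pow_Suc2[symmetric] del: map_map nat_pow_Suc)
  ultimately have "H G (x # replicate m x @ U) (map (conjg G (x [^] Suc m)) U @ [x] @ replicate m x)"
    by (simp only: append.simps append_Nil append_Nil2 append_assoc) (blast intro: H_trans)
  then show ?case by (simp only: replicate_Suc append.simps append_Nil)
qed

lemma H_rep_left: "x \<in> carrier G \<Longrightarrow> set U \<subseteq> carrier G \<Longrightarrow>
  H G (U @ replicate m x) (replicate m x @ map (conjg G (inv (x [^] m))) U)"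
proof -
  assume a: "x \<in> carrier G" "set U \<subseteq> carrier G"
  have "H G (replicate m x @ map (conjg G (inv (x [^] m))) U) (U @ replicate m x)"
    using H_rep_right[of x "map (conjg G (inv (x [^] m))) U" m] a map_conjg_closed[of "inv (x [^] m)" U] by (simp add: map_conjg_inv_cancel del: map_map)
  then show ?thesis by (rule H_sym)
qed

lemma H_block_right: "w \<in> carrier G \<Longrightarrow> set U \<subseteq> carrier G \<Longrightarrow> H G (U @ [w]) (conjg G (lprod G U) w # U)"
proof (induction U)
  case Nil then show ?case by simp
next
  case (Cons u U)
  have "H G ([u] @ (U @ [w]) @ []) ([u] @ (conjg G (lprod G U) w # U) @ [])"
    using Cons by (intro H_ctx) auto
  moreover have "H G ([] @ [u, conjg G (lprod G U) w] @ U) ([] @ [conjg G u (conjg G (lprod G U) w), u] @ U)"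
    using Cons.prems by (intro H_ctx H_elem) auto
  ultimately show ?case using Cons.prems by (auto intro: H_trans simp: conjg_mult)
qed

lemma H_block_left: "w \<in> carrier G \<Longrightarrow> set U \<subseteq> carrier G \<Longrightarrow> H G (w # U) (U @ [conjg G (inv (lprod G U)) w])"
  using H_block_right[of "conjg G (inv (lprod G U)) w" U] by (simp add: H_sym)

lemma H_comm_right: "w \<in> carrier G \<Longrightarrow> set U \<subseteq> carrier G \<Longrightarrow> (\<forall>u\<in>set U. w \<otimes> u = u \<otimes> w) \<Longrightarrow>
  H G (w # U) (U @ [w])"
  using H_right[of w U] by (simp add: map_conjg_comm)

lemma CE_refl[simp]: "CE G u u" by (simp add: CE_def)
lemma CE_trans: "CE G u v \<Longrightarrow> CE G v w \<Longrightarrow> CE G u w" unfolding CE_def by (rule rtranclp_trans)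
lemma CE_sym: "CE G u v \<Longrightarrow> CE G v u" unfolding CE_def by (rule symclp_rtranclp_sym)

lemma CE_conjstep: "set xs \<subseteq> carrier G \<Longrightarrow> x \<in> carrier G \<Longrightarrow> CE G (xs @ [x]) (x # xs)"
  unfolding CE_def by (rule r_into_rtranclp, rule symclpI1) (auto simp: Cs_def intro: C_step.conjugation)

lemma CE_rotate: "set xs \<subseteq> carrier G \<Longrightarrow> set ys \<subseteq> carrier G \<Longrightarrow> CE G (xs @ ys) (ys @ xs)"
proof (induction ys arbitrary: xs rule: rev_induct)
  case Nil then show ?case by simp
next
  case (snoc y ys)
  have "CE G ((xs @ ys) @ [y]) (y # xs @ ys)" using snoc.prems by (intro CE_conjstep) auto
  moreover have "CE G ((y # xs) @ ys) (ys @ (y # xs))" using snoc by (intro snoc.IH) auto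
  ultimately show ?case by (auto intro: CE_trans)
qed

lemma CE_conj_last: "set xs \<subseteq> carrier G \<Longrightarrow> x \<in> carrier G \<Longrightarrow> CE G (xs @ [x]) (map (conjg G x) (xs @ [x]))"
  using CE_conjstep[of xs x] H_CE[OF H_right[of x xs]] by (auto intro: CE_trans)

lemma CE_conj_letter: "set u \<subseteq> carrier G \<Longrightarrow> x \<in> set u \<Longrightarrow> CE G u (map (conjg G x) u)"
proof -
  assume u: "set u \<subseteq> carrier G" and x: "x \<in> set u"
  then obtain xs ys where uu: "u = xs @ x # ys" by (meson split_list)
  have xc: "x \<in> carrier G" using u x by auto
  have 1: "CE G ((xs @ [x]) @ ys) (ys @ (xs @ [x]))" using u uu by (intro CE_rotate) auto
  have 2: "CE G ((ys @ xs) @ [x]) (map (conjg G x) ((ys @ xs) @ [x]))" using u uu xc by (intro CE_conj_last) auto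
  have 3: "CE G (map (conjg G x) ys @ (map (conjg G x) xs @ [x])) ((map (conjg G x) xs @ [x]) @ map (conjg G x) ys)"
    using u uu xc by (intro CE_rotate) auto
  have e1: "(xs @ [x]) @ ys = u" using uu by simp
  have e2: "ys @ (xs @ [x]) = (ys @ xs) @ [x]" by simp
  have e3: "map (conjg G x) ((ys @ xs) @ [x]) = map (conjg G x) ys @ (map (conjg G x) xs @ [x])" using xc by simp
  have e4: "(map (conjg G x) xs @ [x]) @ map (conjg G x) ys = map (conjg G x) u" using uu xc by simp
  show ?thesis using 1 2 3 unfolding e1 e2 e3 e4 by (blast intro: CE_trans)
qed

lemma CE_conj_pow: "set u \<subseteq> carrier G \<Longrightarrow> x \<in> set u \<Longrightarrow> CE G u (map (conjg G (x [^] (n::nat))) u)"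
proof (induction n)
  case 0 then show ?case by (simp add: map_idI subset_iff)
next
  case (Suc n)
  have xc: "x \<in> carrier G" using Suc.prems by auto
  have "x \<in> set (map (conjg G (x [^] n)) u)"
    using Suc.prems xc by (auto intro!: image_eqI[of x _ x] simp: conjg_comm nat_pow_Suc2[symmetric])
  then have "CE G (map (conjg G (x [^] n)) u) (map (conjg G x) (map (conjg G (x [^] n)) u))"
    using Suc.prems xc by (intro CE_conj_letter) auto
  moreover have "map (conjg G x) (map (conjg G (x [^] n)) u) = map (conjg G (x [^] Suc n)) u"
    using Suc.prems xc by (simp add: map_conjg_mult nat_pow_Suc2[symmetric] del: map_map nat_pow_Suc)
  ultimately show ?case using Suc xc by (metis CE_trans)
qed

end


context group
begin

lemma tc_carrier: "twist_chain G a n \<Longrightarrow> 1 \<le> i \<Longrightarrow> i \<le> n \<Longrightarrow> a i \<in> carrier G"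
  by (auto simp: twist_chain_def)

lemma tc_braid: "twist_chain G a n \<Longrightarrow> 1 \<le> i \<Longrightarrow> Suc i \<le> n \<Longrightarrow>
   a i \<otimes> (a (Suc i) \<otimes> a i) = a (Suc i) \<otimes> (a i \<otimes> a (Suc i))"
proof -
  assume tc: "twist_chain G a n" and i: "1 \<le> i" "Suc i \<le> n"
  have c: "a i \<in> carrier G" "a (Suc i) \<in> carrier G" using tc i by (auto intro: tc_carrier)
  have "a i \<otimes> a (Suc i) \<otimes> a i = a (Suc i) \<otimes> a i \<otimes> a (Suc i)"
    using tc i unfolding twist_chain_def by auto
  then show ?thesis using c by (simp add: m_assoc)
qed

lemma tc_comm: "twist_chain G a n \<Longrightarrow> 1 \<le> i \<Longrightarrow> i + 2 \<le> j \<Longrightarrow> j \<le> n \<Longrightarrow> a i \<otimes> a j = a j \<otimes> a i"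
proof -
  assume "twist_chain G a n" "1 \<le> i" "i + 2 \<le> j" "j \<le> n"
  moreover have "\<forall>i j. i \<in> {1..n} \<and> j \<in> {1..n} \<and> i + 2 \<le> j \<longrightarrow> a i \<otimes> a j = a j \<otimes> a i"
    using calculation(1) unfolding twist_chain_def by blast
  ultimately show ?thesis by (metis atLeastAtMost_iff le_add1 le_trans add_leD1)
qed

lemma tc_comm2: "twist_chain G a n \<Longrightarrow> 1 \<le> i \<Longrightarrow> i + 2 \<le> j \<Longrightarrow> j \<le> n \<Longrightarrow> a j \<otimes> a i = a i \<otimes> a j"
  using tc_comm by metis

lemma tc_mono: "twist_chain G a n \<Longrightarrow> k \<le> n \<Longrightarrow> twist_chain G a k"
proof -
  assume tc: "twist_chain G a n" and k: "k \<le> n"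
  have 1: "\<forall>i\<in>{1..k}. a i \<in> carrier G" using tc k by (auto intro: tc_carrier)
  have 2: "\<forall>i. 1 \<le> i \<and> i < k \<longrightarrow> a i \<otimes> a (Suc i) \<otimes> a i = a (Suc i) \<otimes> a i \<otimes> a (Suc i)"
    using tc k unfolding twist_chain_def by auto
  have 3: "\<forall>i j. i \<in> {1..k} \<and> j \<in> {1..k} \<and> i + 2 \<le> j \<longrightarrow> a i \<otimes> a j = a j \<otimes> a i"
    using tc k by (auto intro: tc_comm)
  show ?thesis unfolding twist_chain_def using 1 2 3 by blast
qed

lemma key_identity:
  assumes c: "x \<in> carrier G" "y \<in> carrier G" "z \<in> carrier G"
    and xy: "x \<otimes> (y \<otimes> x) = y \<otimes> (x \<otimes> y)" and yz: "y \<otimes> (z \<otimes> y) = z \<otimes> (y \<otimes> z)"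
  shows "conjg G (inv (lprod G [y, x, z, y])) x = z"
proof -
  have "lprod G [y, x, z, y] \<otimes> z = y \<otimes> (x \<otimes> (z \<otimes> (y \<otimes> z)))" using c by (simp add: m_assoc)
  also have "\<dots> = y \<otimes> (x \<otimes> (y \<otimes> (z \<otimes> y)))" using yz by simp
  also have "\<dots> = (y \<otimes> (x \<otimes> y)) \<otimes> (z \<otimes> y)" using c by (simp add: m_assoc)
  also have "\<dots> = (x \<otimes> (y \<otimes> x)) \<otimes> (z \<otimes> y)" using xy by simp
  also have "\<dots> = x \<otimes> lprod G [y, x, z, y]" using c by (simp add: m_assoc)
  finally have e: "lprod G [y, x, z, y] \<otimes> z = x \<otimes> lprod G [y, x, z, y]" .
  have P: "lprod G [y, x, z, y] \<in> carrier G" using c by simp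
  have "conjg G (inv (lprod G [y, x, z, y])) x = inv (lprod G [y, x, z, y]) \<otimes> (x \<otimes> lprod G [y, x, z, y])"
    unfolding conjg_def using c P by (simp add: m_assoc)
  also have "\<dots> = z" unfolding e[symmetric] using c P by simp
  finally show ?thesis .
qed

lemma H_rep_block:
  assumes c: "x \<in> carrier G" "z \<in> carrier G" "set V \<subseteq> carrier G"
    and k: "conjg G (inv (lprod G V)) x = z"
  shows "H G (replicate m x @ V) (V @ replicate m z)"
proof (induction m)
  case 0 then show ?case by simp
next
  case (Suc m)
  have "H G ([x] @ (replicate m x @ V) @ []) ([x] @ (V @ replicate m z) @ [])"
    using Suc c by (intro H_ctx) auto
  moreover have "H G ([] @ (x # V) @ replicate m z) ([] @ (V @ [z]) @ replicate m z)"
    using c H_block_left[of x V] k by (intro H_ctx) auto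
  ultimately show ?case by (auto intro: H_trans)
qed

lemma local_lemma:
  assumes c: "x \<in> carrier G" "y \<in> carrier G" "z \<in> carrier G"
    and xy: "x \<otimes> (y \<otimes> x) = y \<otimes> (x \<otimes> y)" and yz: "y \<otimes> (z \<otimes> y) = z \<otimes> (y \<otimes> z)"
    and xz: "x \<otimes> z = z \<otimes> x"
  shows "H G ([conjg G (x [^] m) y, x, z, conjg G (x [^] m) y] @ replicate m x)
             (replicate (Suc m) z @ map (conjg G (inv (z [^] Suc m))) [y, x, conjg G z y])"
proof -
  have xm: "x [^] m \<in> carrier G" "inv (x [^] m) \<in> carrier G" using c by auto
  have "x \<otimes> x [^] m = x [^] m \<otimes> x" using c by (intro comm_pow) auto
  then have "x \<otimes> inv (x [^] m) = inv (x [^] m) \<otimes> x" using c by (intro comm_inv) auto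
  then have cx: "conjg G (inv (x [^] m)) x = x"
    using c xm by (intro conjg_comm) auto
  have "z \<otimes> x [^] m = x [^] m \<otimes> z" using c xz by (intro comm_pow) auto
  then have "z \<otimes> inv (x [^] m) = inv (x [^] m) \<otimes> z" using c by (intro comm_inv) auto
  then have cz: "conjg G (inv (x [^] m)) z = z"
    using c xm by (intro conjg_comm) auto
  have s1: "H G ([conjg G (x [^] m) y, x, z, conjg G (x [^] m) y] @ replicate m x)
               (replicate m x @ [y, x, z, y])"
    using H_rep_left[of x "[conjg G (x [^] m) y, x, z, conjg G (x [^] m) y]" m] c xm cx cz by simp
  have s2: "H G (replicate m x @ [y, x, z, y]) ([y, x, z, y] @ replicate m z)"
    using c key_identity[OF c xy yz] by (intro H_rep_block) auto
  have s3: "H G ([y, x] @ [z, y] @ replicate m z) ([y, x] @ [conjg G z y, z] @ replicate m z)"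
    using c by (intro H_ctx H_elem) auto
  have zm: "z [^] Suc m \<in> carrier G" "inv (z [^] Suc m) \<in> carrier G" using c by auto
  have czx: "conjg G (z [^] Suc m) (conjg G (inv (z [^] Suc m)) x) = x" using c zm by simp
  have s4: "H G (replicate (Suc m) z @ map (conjg G (inv (z [^] Suc m))) [y, x, conjg G z y])
     ([y, x, conjg G z y] @ replicate (Suc m) z)"
    using H_rep_right[of z "map (conjg G (inv (z [^] Suc m))) [y, x, conjg G z y]" "Suc m"] c zm
    by (simp del: replicate_Suc nat_pow_Suc)
  show ?thesis
    using s1 s2 s3 H_sym[OF s4] by (auto intro: H_trans)
qed

end


definition psi :: "('a, 'b) monoid_scheme \<Rightarrow> (nat \<Rightarrow> 'a) \<Rightarrow> nat \<Rightarrow> 'a" where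
  "psi G a l = foldr (\<lambda>j acc. (a (2*j+1) [^]\<^bsub>G\<^esub> (j+1)) \<otimes>\<^bsub>G\<^esub> acc) (rev [0..<l]) \<one>\<^bsub>G\<^esub>"

lemma phi_psi: "phi G a l = a (2*l+1) [^]\<^bsub>G\<^esub> (l+1) \<otimes>\<^bsub>G\<^esub> psi G a l"
  by (simp add: phi_def psi_def)

lemma psi_Suc: "psi G a (Suc l) = phi G a l"
  by (simp add: phi_def psi_def)

lemma psi_0: "psi G a 0 = \<one>\<^bsub>G\<^esub>"
  by (simp add: psi_def)

context group
begin

lemma psi_props:
  assumes tc: "twist_chain G a n" and l: "2*l \<le> n"
  shows "psi G a l \<in> carrier G \<and> (\<forall>w. w \<in> carrier G \<longrightarrow> (\<forall>j<l. w \<otimes> a (2*j+1) = a (2*j+1) \<otimes> w)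
            \<longrightarrow> w \<otimes> psi G a l = psi G a l \<otimes> w)"
  using l
proof (induction l)
  case 0 then show ?case by (simp add: psi_0)
next
  case (Suc l)
  have ac: "a (2*l+1) \<in> carrier G" using tc Suc.prems by (intro tc_carrier) auto
  have IH: "psi G a l \<in> carrier G \<and> (\<forall>w. w \<in> carrier G \<longrightarrow> (\<forall>j<l. w \<otimes> a (2*j+1) = a (2*j+1) \<otimes> w)
            \<longrightarrow> w \<otimes> psi G a l = psi G a l \<otimes> w)" using Suc by auto
  have e: "psi G a (Suc l) = a (2*l+1) [^] (l+1) \<otimes> psi G a l" by (simp only: psi_Suc phi_psi)
  show ?case
  proof (intro conjI allI impI)
    show "psi G a (Suc l) \<in> carrier G" using e IH ac by simp
  next
    fix w assume w: "w \<in> carrier G" "\<forall>j<Suc l. w \<otimes> a (2*j+1) = a (2*j+1) \<otimes> w"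
    have c1: "w \<otimes> a (2*l+1) [^] (l+1) = a (2*l+1) [^] (l+1) \<otimes> w"
      using w ac by (intro comm_pow) auto
    have c2: "w \<otimes> psi G a l = psi G a l \<otimes> w" using IH w by auto
    show "w \<otimes> psi G a (Suc l) = psi G a (Suc l) \<otimes> w"
      unfolding e using comm_mult[OF w(1) _ _ c1 c2] IH ac by auto
  qed
qed

definition Wa :: "(nat \<Rightarrow> 'a) \<Rightarrow> nat \<Rightarrow> 'a list" where
  "Wa a l = map a (rev [1..<2*l+1]) @ map a (rev [1..<2*l+2])"

definition Wa' :: "(nat \<Rightarrow> 'a) \<Rightarrow> nat \<Rightarrow> 'a list" where
  "Wa' a l = replicate (l+1) (a (2*l+1)) @ map a (rev [1..<2*l+1])
      @ map (bcurve G a) (rev (map (\<lambda>j. 2*j) [1..<l+1]))"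

lemma Wa_0: "Wa a 0 = [a 1]" by (simp add: Wa_def)
lemma Wa'_0: "Wa' a 0 = [a 1]" by (simp add: Wa'_def)

lemma Wa_l: "Wa a l = map a (rev [1..<2*l+1]) @ [a (2*l+1)] @ map a (rev [1..<2*l+1])"
  by (simp add: Wa_def numeral_3_eq_3)

lemma Wa_Suc: "Wa a (Suc l) = [a (2*l+2), a (2*l+1)] @ map a (rev [1..<2*l+1]) @
   [a (2*l+3), a (2*l+2), a (2*l+1)] @ map a (rev [1..<2*l+1])"
  by (simp add: Wa_def numeral_3_eq_3)

lemma Wa'_l: "Wa' a l = replicate (Suc l) (a (2*l+1)) @ map a (rev [1..<2*l+1])
      @ map (bcurve G a) (rev (map (\<lambda>j. 2*j) [1..<l+1]))"
  by (simp add: Wa'_def numeral_3_eq_3)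

lemma Wa'_Suc: "Wa' a (Suc l) = replicate (Suc (Suc l)) (a (2*l+3)) @ [a (2*l+2), a (2*l+1)] @ map a (rev [1..<2*l+1])
      @ [bcurve G a (2*l+2)] @ map (bcurve G a) (rev (map (\<lambda>j. 2*j) [1..<l+1]))"
  by (simp add: Wa'_def numeral_3_eq_3)

end


context group
begin

lemma gen_a:
  assumes "twist_chain G a (2*l+1)" "set D \<subseteq> carrier G" "set E \<subseteq> carrier G"
  shows "CE G (D @ Wa a l @ E) (map (conjg G (phi G a l)) D @ Wa' a l @ map (conjg G (phi G a l)) E)"
  using assms
proof (induction l arbitrary: D E)
  case 0
  have a1: "a 1 \<in> carrier G" using 0 by (intro tc_carrier) auto
  have ph: "phi G a 0 = a 1" using a1 by (simp add: phi_def)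
  have "CE G (D @ [a 1] @ E) (map (conjg G (a 1)) (D @ [a 1] @ E))" using 0 a1 by (intro CE_conj_letter) auto
  then show ?case using a1 by (simp add: Wa_0 Wa'_0 ph)
next
  case (Suc l)
  define x where "x = a (2*l+1)"
  define y where "y = a (2*l+2)"
  define z where "z = a (2*l+3)"
  define A where "A = map a (rev [1..<2*l+1])"
  define B where "B = map (bcurve G a) (rev (map (\<lambda>j. 2*j) [1..<l+1]))"
  define m where "m = Suc l"
  define b where "b = conjg G z y"
  have tc: "twist_chain G a (2*l+3)" using Suc.prems by (simp add: numeral_3_eq_3)
  have tc': "twist_chain G a (2*l+1)" using tc by (rule tc_mono) simp
  have Dc: "set D \<subseteq> carrier G" and Ec: "set E \<subseteq> carrier G" using Suc.prems by auto
  have xc: "x \<in> carrier G" unfolding x_def using tc by (intro tc_carrier) auto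
  have yc: "y \<in> carrier G" unfolding y_def using tc by (intro tc_carrier) auto
  have zc: "z \<in> carrier G" unfolding z_def using tc by (intro tc_carrier) auto
  have bc: "b \<in> carrier G" unfolding b_def using yc zc by simp
  have setA: "\<forall>u\<in>set A. \<exists>j. 1 \<le> j \<and> j \<le> 2*l \<and> u = a j" unfolding A_def by (auto simp del: upt_Suc)
  have Ac: "set A \<subseteq> carrier G"
  proof
    fix u assume "u \<in> set A"
    then obtain j where j: "1 \<le> j" "j \<le> 2*l" "u = a j" using setA by blast
    show "u \<in> carrier G" using tc_carrier[OF tc, of j] j by simp
  qed
  have setB: "\<forall>u\<in>set B. \<exists>j. 1 \<le> j \<and> j \<le> l \<and> u = conjg G (a (2*j+1)) (a (2*j))"
    unfolding B_def bcurve_def by (auto simp del: upt_Suc)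
  have Bc: "set B \<subseteq> carrier G"
  proof
    fix u assume "u \<in> set B"
    then obtain j where j: "1 \<le> j" "j \<le> l" "u = conjg G (a (2*j+1)) (a (2*j))" using setB by blast
    have "a (2*j+1) \<in> carrier G" "a (2*j) \<in> carrier G" using tc j by (auto intro!: tc_carrier)
    then show "u \<in> carrier G" using j by simp
  qed
  have xy: "x \<otimes> (y \<otimes> x) = y \<otimes> (x \<otimes> y)"
    using tc_braid[OF tc, of "2*l+1"] unfolding x_def y_def by simp
  have yz: "y \<otimes> (z \<otimes> y) = z \<otimes> (y \<otimes> z)"
    using tc_braid[OF tc, of "2*l+2"] unfolding y_def z_def by (simp add: numeral_3_eq_3)
  have xz: "x \<otimes> z = z \<otimes> x"
    using tc_comm[OF tc, of "2*l+1" "2*l+3"] unfolding x_def z_def by simp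
  have zA: "\<forall>u\<in>set A. z \<otimes> u = u \<otimes> z"
  proof
    fix u assume "u \<in> set A"
    then obtain j where j: "1 \<le> j" "j \<le> 2*l" "u = a j" using setA by blast
    show "z \<otimes> u = u \<otimes> z" using tc_comm[OF tc, of j "2*l+3"] j unfolding z_def by simp
  qed
  have yA: "\<forall>u\<in>set A. y \<otimes> u = u \<otimes> y"
  proof
    fix u assume "u \<in> set A"
    then obtain j where j: "1 \<le> j" "j \<le> 2*l" "u = a j" using setA by blast
    show "y \<otimes> u = u \<otimes> y" using tc_comm[OF tc, of j "2*l+2"] j unfolding y_def by simp
  qed
  have bA: "\<forall>u\<in>set A. b \<otimes> u = u \<otimes> b"
  proof
    fix u assume u: "u \<in> set A"
    then have uc: "u \<in> carrier G" using Ac by auto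
    have "u \<otimes> b = b \<otimes> u" unfolding b_def
      using comm_conjg[OF uc zc yc] zA yA u by auto
    then show "b \<otimes> u = u \<otimes> b" by simp
  qed
  have zB: "\<forall>u\<in>set B. z \<otimes> u = u \<otimes> z"
  proof
    fix u assume "u \<in> set B"
    then obtain j where j: "1 \<le> j" "j \<le> l" "u = conjg G (a (2*j+1)) (a (2*j))" using setB by blast
    have c: "a (2*j+1) \<in> carrier G" "a (2*j) \<in> carrier G" using tc j by (auto intro!: tc_carrier)
    have "z \<otimes> a (2*j+1) = a (2*j+1) \<otimes> z" using tc_comm[OF tc, of "2*j+1" "2*l+3"] j unfolding z_def by simp
    moreover have "z \<otimes> a (2*j) = a (2*j) \<otimes> z" using tc_comm[OF tc, of "2*j" "2*l+3"] j unfolding z_def by simp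
    ultimately show "z \<otimes> u = u \<otimes> z" using comm_conjg[OF zc c] j by simp
  qed
  have ps: "psi G a l \<in> carrier G \<and> (\<forall>w. w \<in> carrier G \<longrightarrow> (\<forall>j<l. w \<otimes> a (2*j+1) = a (2*j+1) \<otimes> w)
            \<longrightarrow> w \<otimes> psi G a l = psi G a l \<otimes> w)"
    using psi_props[OF tc', of l] by simp
  have psc: "psi G a l \<in> carrier G" using ps by simp
  have psw: "conjg G (psi G a l) w = w" if w: "w \<in> carrier G" "\<forall>j<l. w \<otimes> a (2*j+1) = a (2*j+1) \<otimes> w" for w
  proof -
    have "w \<otimes> psi G a l = psi G a l \<otimes> w" using ps w by blast
    then show ?thesis using w psc by (intro conjg_comm) auto
  qed
  have psx: "conjg G (psi G a l) x = x"
    using xc unfolding x_def by (intro psw) (auto intro: tc_comm2[OF tc])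
  have psy: "conjg G (psi G a l) y = y"
    using yc unfolding y_def by (intro psw) (auto intro: tc_comm2[OF tc])
  have psz: "conjg G (psi G a l) z = z"
    using zc unfolding z_def by (intro psw) (auto intro: tc_comm2[OF tc])
  have phl: "phi G a l = x [^] m \<otimes> psi G a l" unfolding phi_psi x_def m_def by simp
  have phc: "phi G a l \<in> carrier G" using phl xc psc by simp
  have xmx: "conjg G (x [^] m) x = x" using xc by (intro conjg_comm) (auto intro: comm_pow[symmetric])
  have xmz: "conjg G (x [^] m) z = z" using xc zc xz
    by (intro conjg_comm) (auto simp: comm_pow[OF zc xc, symmetric])
  have phx: "conjg G (phi G a l) x = x" using xc psc xmx psx by (simp add: phl conjg_mult[symmetric])
  have phy: "conjg G (phi G a l) y = conjg G (x [^] m) y" using yc psc psy by (simp add: phl conjg_mult[symmetric] xc)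
  have phz: "conjg G (phi G a l) z = z" using zc xc psc xmz psz by (simp add: phl conjg_mult[symmetric])
  have h1: "H G ([z] @ (y # A) @ []) ([z] @ (A @ [y]) @ [])"
    using zc yc Ac yA by (intro H_ctx H_comm_right) auto
  have h2: "H G ([] @ (z # A) @ [y]) ([] @ (A @ [z]) @ [y])"
    using zc yc Ac zA by (intro H_ctx H_comm_right) auto
  have h12: "H G ([z, y] @ A) (A @ [z, y])" using h1 h2 by (auto intro: H_trans)
  have s1: "CE G (D @ Wa a (Suc l) @ E) ((D @ [y, x, z, y]) @ Wa a l @ E)"
  proof -
    have "H G ((D @ [y, x]) @ (A @ [z, y]) @ ([x] @ A @ E)) ((D @ [y, x]) @ ([z, y] @ A) @ ([x] @ A @ E))"
      using H_sym[OF h12] Dc Ec Ac xc yc by (intro H_ctx) auto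
    moreover have "D @ Wa a (Suc l) @ E = (D @ [y, x]) @ (A @ [z, y]) @ ([x] @ A @ E)"
      unfolding Wa_Suc x_def y_def z_def A_def by simp
    moreover have "(D @ [y, x]) @ ([z, y] @ A) @ ([x] @ A @ E) = (D @ [y, x, z, y]) @ Wa a l @ E"
      unfolding Wa_l x_def y_def z_def A_def by simp
    ultimately show ?thesis using H_CE by metis
  qed
  have s2: "CE G ((D @ [y, x, z, y]) @ Wa a l @ E)
     (map (conjg G (phi G a l)) D @ [conjg G (x [^] m) y, x, z, conjg G (x [^] m) y] @ replicate m x @ A @ B
       @ map (conjg G (phi G a l)) E)"
  proof -
    have "CE G ((D @ [y, x, z, y]) @ Wa a l @ E)
      (map (conjg G (phi G a l)) (D @ [y, x, z, y]) @ Wa' a l @ map (conjg G (phi G a l)) E)"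
      using Suc.IH[OF tc', of "D @ [y, x, z, y]" E] Dc Ec xc yc zc by auto
    moreover have "map (conjg G (phi G a l)) (D @ [y, x, z, y]) @ Wa' a l @ map (conjg G (phi G a l)) E
       = map (conjg G (phi G a l)) D @ [conjg G (x [^] m) y, x, z, conjg G (x [^] m) y] @ replicate m x @ A @ B
       @ map (conjg G (phi G a l)) E"
      using phx phy phz unfolding Wa'_l x_def A_def B_def m_def by simp
    ultimately show ?thesis by simp
  qed
  define g where "g = z [^] Suc m"
  have gc: "g \<in> carrier G" "inv g \<in> carrier G" unfolding g_def using zc by auto
  have s3: "CE G (map (conjg G (phi G a l)) D @ [conjg G (x [^] m) y, x, z, conjg G (x [^] m) y] @ replicate m x @ A @ B
       @ map (conjg G (phi G a l)) E)
     (map (conjg G (phi G a l)) D @ (replicate (Suc m) z @ map (conjg G (inv g)) [y, x, b]) @ (A @ B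
       @ map (conjg G (phi G a l)) E))"
  proof -
    have "H G (map (conjg G (phi G a l)) D @ ([conjg G (x [^] m) y, x, z, conjg G (x [^] m) y] @ replicate m x) @ (A @ B
       @ map (conjg G (phi G a l)) E))
     (map (conjg G (phi G a l)) D @ (replicate (Suc m) z @ map (conjg G (inv g)) [y, x, b]) @ (A @ B
       @ map (conjg G (phi G a l)) E))"
      unfolding g_def b_def using local_lemma[OF xc yc zc xy yz xz, of m] phc Dc Ec Ac Bc
      by (intro H_ctx) auto
    then show ?thesis by (simp add: H_CE)
  qed
  have gcomm: "u \<otimes> g = g \<otimes> u" if u: "u \<in> carrier G" "z \<otimes> u = u \<otimes> z" for u
    using comm_pow[OF u(1) zc, of "Suc m"] u zc unfolding g_def by (simp del: nat_pow_Suc)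
  have gz: "conjg G g z = z" using gc zc gcomm[OF zc] by (intro conjg_comm) auto
  have gA: "map (conjg G g) A = A"
    using Ac zA gc gcomm by (intro map_conjg_comm) (auto simp: subset_iff)
  have gB: "map (conjg G g) B = B"
    using Bc zB gc gcomm by (intro map_conjg_comm) (auto simp: subset_iff)
  have gphi: "g \<otimes> phi G a l = phi G a (Suc l)"
    unfolding g_def phi_psi[of G a "Suc l"] psi_Suc z_def m_def by (simp add: numeral_3_eq_3)
  have s4: "CE G (map (conjg G (phi G a l)) D @ (replicate (Suc m) z @ map (conjg G (inv g)) [y, x, b]) @ (A @ B
       @ map (conjg G (phi G a l)) E))
      (map (conjg G (phi G a (Suc l))) D @ replicate (Suc m) z @ [y, x] @ ([b] @ A) @ B
       @ map (conjg G (phi G a (Suc l))) E)"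
  proof -
    let ?u = "map (conjg G (phi G a l)) D @ (replicate (Suc m) z @ map (conjg G (inv g)) [y, x, b]) @ (A @ B
       @ map (conjg G (phi G a l)) E)"
    have "CE G ?u (map (conjg G (z [^] Suc m)) ?u)"
      using Dc Ec Ac Bc phc zc xc yc bc gc by (intro CE_conj_pow) auto
    moreover have "map (conjg G (z [^] Suc m)) ?u = map (conjg G (phi G a (Suc l))) D @ replicate (Suc m) z @ [y, x] @ ([b] @ A) @ B
       @ map (conjg G (phi G a (Suc l))) E"
    proof -
      have mD: "map (conjg G g) (map (conjg G (phi G a l)) D) = map (conjg G (phi G a (Suc l))) D"
        using map_conjg_mult[OF gc(1) phc Dc] gphi by simp
      have mE: "map (conjg G g) (map (conjg G (phi G a l)) E) = map (conjg G (phi G a (Suc l))) E"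
        using map_conjg_mult[OF gc(1) phc Ec] gphi by simp
      have mR: "map (conjg G g) (replicate (Suc m) z) = replicate (Suc m) z" using gz by simp
      have mY: "map (conjg G g) (map (conjg G (inv g)) [y, x, b]) = [y, x, b]"
        using map_conjg_inv_cancel[OF gc(1), of "[y, x, b]"] xc yc bc by simp
      show ?thesis unfolding g_def[symmetric] using mD mE mR mY gA gB
        by (simp del: map_map replicate_Suc)
    qed
    ultimately show ?thesis by metis
  qed
  have s5: "CE G (map (conjg G (phi G a (Suc l))) D @ replicate (Suc m) z @ [y, x] @ ([b] @ A) @ B
       @ map (conjg G (phi G a (Suc l))) E)
     (map (conjg G (phi G a (Suc l))) D @ Wa' a (Suc l) @ map (conjg G (phi G a (Suc l))) E)"
  proof -
    have phc': "phi G a (Suc l) \<in> carrier G" using gphi gc phc by (metis m_closed)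
    have "H G ((map (conjg G (phi G a (Suc l))) D @ replicate (Suc m) z @ [y, x]) @ ([b] @ A) @ (B
       @ map (conjg G (phi G a (Suc l))) E))
       ((map (conjg G (phi G a (Suc l))) D @ replicate (Suc m) z @ [y, x]) @ (A @ [b]) @ (B
       @ map (conjg G (phi G a (Suc l))) E))"
      using H_comm_right[OF bc Ac bA] phc' Dc Ec Bc xc yc zc by (intro H_ctx) auto
    moreover have "Wa' a (Suc l) = replicate (Suc m) z @ [y, x] @ A @ [b] @ B"
      unfolding Wa'_Suc m_def z_def y_def x_def A_def B_def b_def bcurve_def by (simp add: numeral_3_eq_3)
    ultimately show ?thesis by (intro H_CE) simp
  qed
  show ?case using s1 s2 s3 s4 s5 by (blast intro: CE_trans)
qed

end


context group
begin

lemma Cs_rev: "Cs G u v \<Longrightarrow> Cs G (rev (map (m_inv G) v)) (rev (map (m_inv G) u))"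
  unfolding Cs_def
proof (elim conjE)
  assume st: "C_step G u v" and uc: "set u \<subseteq> carrier G" and vc: "set v \<subseteq> carrier G"
  have cc: "set (rev (map (m_inv G) v)) \<subseteq> carrier G" "set (rev (map (m_inv G) u)) \<subseteq> carrier G" using uc vc by auto
  from st have "C_step G (rev (map (m_inv G) v)) (rev (map (m_inv G) u))"
  proof cases
    case (elementary xs p q ys)
    have pq: "p \<in> carrier G" "q \<in> carrier G" using uc elementary by auto
    have e: "conjg G (inv p) (inv (conjg G p q)) = inv q" using pq by (simp add: conjg_inv)
    show ?thesis using C_step.elementary[of G "rev (map (m_inv G) ys)" "inv p" "inv (conjg G p q)" "rev (map (m_inv G) xs)"]
      elementary e by simp
  next
    case (conjugation xs x)
    then show ?thesis using C_step.conjugation[of G "rev (map (m_inv G) xs)" "inv x"] by simp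
  qed
  then show "C_step G (rev (map (m_inv G) v)) (rev (map (m_inv G) u)) \<and> set (rev (map (m_inv G) v)) \<subseteq> carrier G
     \<and> set (rev (map (m_inv G) u)) \<subseteq> carrier G" using cc by simp
qed

lemma CE_rev: "CE G u v \<Longrightarrow> CE G (rev (map (m_inv G) u)) (rev (map (m_inv G) v))"
  unfolding CE_def
proof (induction rule: rtranclp_induct)
  case base then show ?case by simp
next
  case (step y z)
  have "symclp (Cs G) (rev (map (m_inv G) y)) (rev (map (m_inv G) z))"
    using step(2) by (auto simp: symclp_def intro: Cs_rev)
  with step(3) show ?case by (meson rtranclp.rtrancl_into_rtrancl)
qed

lemma tc_inv: "twist_chain G a n \<Longrightarrow> twist_chain G (\<lambda>i. inv (a i)) n"
proof -
  assume tc: "twist_chain G a n"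
  have 1: "\<forall>i\<in>{1..n}. inv (a i) \<in> carrier G" using tc by (auto simp: tc_carrier[OF tc])
  have 2: "\<forall>i. 1 \<le> i \<and> i < n \<longrightarrow> inv (a i) \<otimes> inv (a (Suc i)) \<otimes> inv (a i) = inv (a (Suc i)) \<otimes> inv (a i) \<otimes> inv (a (Suc i))"
  proof (intro allI impI)
    fix i assume i: "1 \<le> i \<and> i < n"
    have c: "a i \<in> carrier G" "a (Suc i) \<in> carrier G" using tc i by (auto intro: tc_carrier)
    have "a i \<otimes> (a (Suc i) \<otimes> a i) = a (Suc i) \<otimes> (a i \<otimes> a (Suc i))" using tc_braid[OF tc, of i] i by simp
    then have "inv (a i \<otimes> (a (Suc i) \<otimes> a i)) = inv (a (Suc i) \<otimes> (a i \<otimes> a (Suc i)))" by simp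
    then show "inv (a i) \<otimes> inv (a (Suc i)) \<otimes> inv (a i) = inv (a (Suc i)) \<otimes> inv (a i) \<otimes> inv (a (Suc i))"
      using c by (simp add: inv_mult_group m_assoc)
  qed
  have 3: "\<forall>i j. i \<in> {1..n} \<and> j \<in> {1..n} \<and> i + 2 \<le> j \<longrightarrow> inv (a i) \<otimes> inv (a j) = inv (a j) \<otimes> inv (a i)"
  proof (intro allI impI)
    fix i j assume ij: "i \<in> {1..n} \<and> j \<in> {1..n} \<and> i + 2 \<le> j"
    have c: "a i \<in> carrier G" "a j \<in> carrier G" using tc ij by (auto intro: tc_carrier)
    have "a j \<otimes> a i = a i \<otimes> a j" using tc_comm2[OF tc, of i j] ij by simp
    then have "inv (a j \<otimes> a i) = inv (a i \<otimes> a j)" by simp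
    then show "inv (a i) \<otimes> inv (a j) = inv (a j) \<otimes> inv (a i)" using c by (simp add: inv_mult_group)
  qed
  show ?thesis unfolding twist_chain_def using 1 2 3 by blast
qed

lemma phi_inv: "twist_chain G a (2*l+1) \<Longrightarrow> phi G (\<lambda>i. inv (a i)) l = inv (phi G a l) \<and> phi G a l \<in> carrier G"
proof (induction l)
  case 0
  have "a 1 \<in> carrier G" using 0 by (intro tc_carrier) auto
  then show ?case by (simp add: phi_def)
next
  case (Suc l)
  have tc: "twist_chain G a (2*l+3)" using Suc.prems by (simp add: numeral_3_eq_3)
  have tc': "twist_chain G a (2*l+1)" using tc by (rule tc_mono) simp
  have IH: "phi G (\<lambda>i. inv (a i)) l = inv (phi G a l)" "phi G a l \<in> carrier G" using Suc.IH[OF tc'] by auto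
  have zc: "a (2*l+3) \<in> carrier G" using tc by (intro tc_carrier) auto
  have ps: "psi G a (Suc l) \<in> carrier G \<and> (\<forall>w. w \<in> carrier G \<longrightarrow> (\<forall>j<Suc l. w \<otimes> a (2*j+1) = a (2*j+1) \<otimes> w)
            \<longrightarrow> w \<otimes> psi G a (Suc l) = psi G a (Suc l) \<otimes> w)"
    using psi_props[OF tc, of "Suc l"] by simp
  have "\<forall>j<Suc l. a (2*l+3) \<otimes> a (2*j+1) = a (2*j+1) \<otimes> a (2*l+3)"
    by (auto intro: tc_comm2[OF tc])
  then have "a (2*l+3) \<otimes> phi G a l = phi G a l \<otimes> a (2*l+3)"
    using ps zc unfolding psi_Suc by blast
  then have cm: "a (2*l+3) [^] (l+2) \<otimes> phi G a l = phi G a l \<otimes> a (2*l+3) [^] (l+2)"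
    using comm_pow[OF IH(2) zc, of "l+2"] by simp
  have e1: "phi G a (Suc l) = a (2*l+3) [^] (l+2) \<otimes> phi G a l"
    unfolding phi_psi[of G a "Suc l"] psi_Suc by (simp add: numeral_3_eq_3)
  have e2: "phi G (\<lambda>i. inv (a i)) (Suc l) = inv (a (2*l+3)) [^] (l+2) \<otimes> phi G (\<lambda>i. inv (a i)) l"
    unfolding phi_psi[of G _ "Suc l"] psi_Suc by (simp add: numeral_3_eq_3)
  define P where "P = a (2*l+3) [^] (l+2)"
  have Pc: "P \<in> carrier G" unfolding P_def using zc by simp
  have ip: "inv (a (2*l+3)) [^] (l+2) = inv P" unfolding P_def using zc by (simp only: nat_pow_inv)
  have "inv P \<otimes> inv (phi G a l) = inv (phi G a l \<otimes> P)" using Pc IH(2) by (simp add: inv_mult_group)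
  also have "\<dots> = inv (P \<otimes> phi G a l)" using cm unfolding P_def by simp
  finally have "inv P \<otimes> inv (phi G a l) = inv (P \<otimes> phi G a l)" .
  then show ?case
    unfolding e1 e2 IH(1) ip P_def[symmetric] using Pc IH(2) by simp
qed

end


lemma (in group) map_inv_inv: "set xs \<subseteq> carrier G \<Longrightarrow> map (\<lambda>x. inv (inv x)) xs = xs"
  by (induction xs) auto

lemma (in group) map_inv_inv2: "set xs \<subseteq> carrier G \<Longrightarrow> map (m_inv G \<circ> m_inv G) xs = xs"
  by (induction xs) auto

lemma (in group) map_inv_inv_a: "twist_chain G a n \<Longrightarrow> k \<le> Suc n \<Longrightarrow> map (\<lambda>i. inv (inv (a i))) [1..<k] = map a [1..<k]"
  by (rule map_cong) (auto simp: tc_carrier)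

lemma (in group) map_inv_conj: "g \<in> carrier G \<Longrightarrow> set xs \<subseteq> carrier G \<Longrightarrow>
  map (\<lambda>x. inv (conjg G g (inv x))) xs = map (conjg G g) xs"
  by (rule map_cong) (auto simp: conjg_inv)

lemma (in group) map_inv_conj2: "g \<in> carrier G \<Longrightarrow> set xs \<subseteq> carrier G \<Longrightarrow>
  map (m_inv G \<circ> (conjg G g \<circ> m_inv G)) xs = map (conjg G g) xs"
  by (rule map_cong) (auto simp: conjg_inv)

lemma (in group) map_inv_bcurve: "twist_chain G a n \<Longrightarrow> (\<forall>i\<in>set M. 1 \<le> i \<and> Suc i \<le> n) \<Longrightarrow>
  map (\<lambda>i. inv (bcurve G (\<lambda>i. inv (a i)) i)) M = map (bbar G a) M"
  by (rule map_cong) (auto simp: bcurve_def bbar_def conjg_inv tc_carrier)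

theorem lemma3p4:
  fixes G :: "('a, 'b) monoid_scheme" and a :: "nat \<Rightarrow> 'a" and l :: nat
    and D E :: "'a list"
  assumes "group G" and "l \<ge> 1" and "twist_chain G a (2*l+1)"
    and "set D \<subseteq> carrier G" and "set E \<subseteq> carrier G"
  shows "C_equiv G
           (D @ map a (rev [1..<2*l+1]) @ map a (rev [1..<2*l+2]) @ E)
           (map (conjg G (phi G a l)) D @ replicate (l+1) (a (2*l+1)) @ map a (rev [1..<2*l+1])
              @ map (bcurve G a) (rev (map (\<lambda>j. 2*j) [1..<l+1]))
              @ map (conjg G (phi G a l)) E)
       \<and> C_equiv G
           (D @ map a [1..<2*l+2] @ map a [1..<2*l+1] @ E)
           (map (conjg G (inv\<^bsub>G\<^esub> (phi G a l))) D @ map (bbar G a) (map (\<lambda>j. 2*j) [1..<l+1])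
              @ map a [1..<2*l+1] @ replicate (l+1) (a (2*l+1))
              @ map (conjg G (inv\<^bsub>G\<^esub> (phi G a l))) E)"
proof -
  interpret group G by (rule assms(1))
  have tc: "twist_chain G a (2*l+1)" and Dc: "set D \<subseteq> carrier G" and Ec: "set E \<subseteq> carrier G"
    using assms by auto
  have A: "C_equiv G
           (D @ map a (rev [1..<2*l+1]) @ map a (rev [1..<2*l+2]) @ E)
           (map (conjg G (phi G a l)) D @ replicate (l+1) (a (2*l+1)) @ map a (rev [1..<2*l+1])
              @ map (bcurve G a) (rev (map (\<lambda>j. 2*j) [1..<l+1]))
              @ map (conjg G (phi G a l)) E)"
    using CE_C_equiv[OF gen_a[OF tc Dc Ec]] unfolding Wa_def Wa'_def by simp
  define ai where "ai = (\<lambda>i. inv\<^bsub>G\<^esub> (a i))"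
  have tci: "twist_chain G ai (2*l+1)" unfolding ai_def using tc by (rule tc_inv)
  have phc: "phi G a l \<in> carrier G" and phi_eq: "phi G ai l = inv\<^bsub>G\<^esub> (phi G a l)"
    using phi_inv[OF tc] unfolding ai_def by auto
  define D' where "D' = rev (map (m_inv G) E)"
  define E' where "E' = rev (map (m_inv G) D)"
  have D'c: "set D' \<subseteq> carrier G" and E'c: "set E' \<subseteq> carrier G" unfolding D'_def E'_def using Dc Ec by auto
  have X: "CE G (rev (map (m_inv G) (D' @ Wa ai l @ E')))
     (rev (map (m_inv G) (map (conjg G (phi G ai l)) D' @ Wa' ai l @ map (conjg G (phi G ai l)) E')))"
    by (rule CE_rev, rule gen_a[OF tci D'c E'c])
  have eq1: "rev (map (m_inv G) (D' @ Wa ai l @ E')) = D @ map a [1..<2*l+2] @ map a [1..<2*l+1] @ E"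
    unfolding D'_def E'_def Wa_def ai_def using Dc Ec
    by (simp add: rev_map map_inv_inv2 del: upt_Suc) (auto simp: tc_carrier[OF tc])
  have eq2: "rev (map (m_inv G) (map (conjg G (phi G ai l)) D' @ Wa' ai l @ map (conjg G (phi G ai l)) E'))
     = map (conjg G (inv\<^bsub>G\<^esub> (phi G a l))) D @ map (bbar G a) (map (\<lambda>j. 2*j) [1..<l+1])
              @ map a [1..<2*l+1] @ replicate (l+1) (a (2*l+1))
              @ map (conjg G (inv\<^bsub>G\<^esub> (phi G a l))) E"
  proof -
    have bb: "map (\<lambda>i. inv\<^bsub>G\<^esub> (bcurve G ai i)) (map (\<lambda>j. 2*j) [1..<l+1]) = map (bbar G a) (map (\<lambda>j. 2*j) [1..<l+1])"
      unfolding ai_def by (rule map_inv_bcurve[OF tc]) auto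
    show ?thesis
      unfolding D'_def E'_def Wa'_def phi_eq using Dc Ec phc bb
      by (simp add: rev_map map_inv_conj map_inv_conj2 ai_def del: upt_Suc)
         (auto simp: tc_carrier[OF tc] replicate_app_Cons_same)
  qed
  have B: "C_equiv G
           (D @ map a [1..<2*l+2] @ map a [1..<2*l+1] @ E)
           (map (conjg G (inv\<^bsub>G\<^esub> (phi G a l))) D @ map (bbar G a) (map (\<lambda>j. 2*j) [1..<l+1])
              @ map a [1..<2*l+1] @ replicate (l+1) (a (2*l+1))
              @ map (conjg G (inv\<^bsub>G\<^esub> (phi G a l))) E)"
    using CE_C_equiv[OF X] unfolding eq1 eq2 .
  show ?thesis using A B by simp
qed


end
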